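(* Let $p\ge 5$ be a prime and let $\rho=(a,2t,b)$ be a positive definite binary quadratic form of discriminant $(2t)^2-4ab=-16p$. Suppose that either $\rho$ is primitive and not in the principal genus, or $\rho=4\rho'$ with $\rho'$ primitive. Then $\rho$ is properly represented by a primitive ternary quadratic form $f$ with invariants $\Omega=2p$ and $\Delta=1$, and any two primitive ternary forms with these invariants properly representing $\rho$ are equivalent. Moreover the reciprocal $F$ of $f$ is improperly primitive with discriminant $\det(A_F)/2=p$.
   Context: A ternary quadratic form is $f=a_{11}x^2+a_{22}y^2+a_{33}z^2+2a_{23}yz+2a_{13}xz+2a_{12}xy$ with integer $a_{ij}$ and symmetric matrix $A_f=(a_{ij})$; its discriminant is $\det(A_f)/2$. With $\tau=\gcd(a_{ij})$ and $\sigma=\gcd(a_{11},a_{22},a_{33},2a_{23},2a_{13},2a_{12})$, $f$ is primitive if $\tau=1$, improperly primitive if $\tau=1,\sigma=2$. With $A_{ij}$ the cofactors, $\Omega=\gcd(A_{ij})$ and $\det(A_f)=\Delta\Omega^2$ define the invariants $\Omega,\Delta$; the reciprocal is $F=\frac1\Omega\sum A_{ij}X_iX_j$. Two ternary forms $f,g$ are equivalent if $A_g=UA_fU^t$ for some integer $U$ with $\det U=\pm1$. A binary form with matrix $B$ is properly represented by $f$ if $M^tA_fM=B$ for an integer $3\times2$ matrix $M$ whose $2\times 2$ minors are coprime. The form $(a,2t,b)$ is $ax^2+2txy+by^2$ with matrix $\begin{pmatrix}a&t\\t&b\end{pmatrix}$. The principal genus of discriminant $-16p$ is the genus containing $x^2+4py^2$.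 *)

theory Defs
  imports "HOL-Analysis.Analysis"
begin

(* Ternary forms are represented by their (symmetric, integer) Gram matrix A_f :: int^3^3,
   f = a11 x^2 + a22 y^2 + a33 z^2 + 2 a23 yz + 2 a13 xz + 2 a12 xy. *)

definition symmetric3 :: "int^3^3 \<Rightarrow> bool" where
  "symmetric3 A \<longleftrightarrow> transpose A = A"

definition tern_tau :: "int^3^3 \<Rightarrow> int" where
  "tern_tau A = Gcd {A $ i $ j | i j. True}"

definition tern_sigma :: "int^3^3 \<Rightarrow> int" where
  "tern_sigma A = Gcd ({A $ i $ i | i. True} \<union> {2 * A $ i $ j | i j. i \<noteq> j})"

definition tern_primitive :: "int^3^3 \<Rightarrow> bool" where
  "tern_primitive A \<longleftrightarrow> tern_tau A = 1"

definition tern_improperly_primitive :: "int^3^3 \<Rightarrow> bool" where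
  "tern_improperly_primitive A \<longleftrightarrow> tern_tau A = 1 \<and> tern_sigma A = 2"

(* cofactor matrix of a 3x3 matrix: A_ij = (-1)^(i+j) * (minor deleting row i, column j);
   for 3x3 matrices this equals the cyclic formula below (indices taken mod 3). *)
definition cof3 :: "int^3^3 \<Rightarrow> int^3^3" where
  "cof3 A = (\<chi> i j. A $ (i+1) $ (j+1) * A $ (i+2) $ (j+2) - A $ (i+1) $ (j+2) * A $ (i+2) $ (j+1))"

definition tern_Omega :: "int^3^3 \<Rightarrow> int" where
  "tern_Omega A = Gcd {cof3 A $ i $ j | i j. True}"

definition tern_invariants :: "int^3^3 \<Rightarrow> int \<Rightarrow> int \<Rightarrow> bool" where
  "tern_invariants A Om D \<longleftrightarrow> tern_Omega A = Om \<and> det A = D * Om^2"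

definition reciprocal :: "int^3^3 \<Rightarrow> int^3^3" where
  "reciprocal A = (\<chi> i j. cof3 A $ i $ j div tern_Omega A)"

definition tern_equivalent :: "int^3^3 \<Rightarrow> int^3^3 \<Rightarrow> bool" where
  "tern_equivalent A B \<longleftrightarrow> (\<exists>U::int^3^3. (det U = 1 \<or> det U = -1) \<and> B = U ** A ** transpose U)"

(* matrix of the binary form (a,2t,b) = a x^2 + 2t xy + b y^2 *)
definition bin_mat :: "int \<Rightarrow> int \<Rightarrow> int \<Rightarrow> int^2^2" where
  "bin_mat a t b = vector [vector [a, t], vector [t, b]]"

definition minors32 :: "int^2^3 \<Rightarrow> int set" where
  "minors32 M = {M $ r $ 1 * M $ s $ 2 - M $ r $ 2 * M $ s $ 1 | r s. r \<noteq> s}"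

definition properly_represents :: "int^3^3 \<Rightarrow> int^2^2 \<Rightarrow> bool" where
  "properly_represents A B \<longleftrightarrow>
     (\<exists>M::int^2^3. transpose M ** A ** M = B \<and> Gcd (minors32 M) = 1)"

definition bqf :: "int \<Rightarrow> int \<Rightarrow> int \<Rightarrow> int \<Rightarrow> int \<Rightarrow> int" where
  "bqf a b c x y = a * x^2 + b * x * y + c * y^2"

definition bin_primitive :: "int \<Rightarrow> int \<Rightarrow> int \<Rightarrow> bool" where
  "bin_primitive a b c \<longleftrightarrow> Gcd {a, b, c} = 1"

definition unit_values :: "int \<Rightarrow> int \<Rightarrow> int \<Rightarrow> int \<Rightarrow> int set" where
  "unit_values a b c D = {bqf a b c x y mod \<bar>D\<bar> | x y. coprime (bqf a b c x y) D}"

(* two primitive forms of discriminant D are in the same genus iff they represent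
   the same values in (Z/DZ)^* *)
definition same_genus :: "int \<times> int \<times> int \<Rightarrow> int \<times> int \<times> int \<Rightarrow> bool" where
  "same_genus f g \<longleftrightarrow> (case f of (a, b, c) \<Rightarrow> case g of (a', b', c') \<Rightarrow>
      unit_values a b c (b^2 - 4*a*c) = unit_values a' b' c' (b'^2 - 4*a'*c'))"

definition in_principal_genus :: "int \<Rightarrow> int \<times> int \<times> int \<Rightarrow> bool" where
  "in_principal_genus p f \<longleftrightarrow> same_genus f (1, 0, 4*p)"

end

theory Submission
  imports Defs "HOL-Number_Theory.Number_Theory"
begin


lemma legendre_range: "Legendre a p \<in> {-1,0,1}"
  by (simp add: Legendre_def)

lemma small_cong_eq:
  fixes x y p :: int
  assumes "p > 2" "\<bar>x\<bar> \<le> 1" "\<bar>y\<bar> \<le> 1" "[x = y] (mod p)"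
  shows "x = y"
proof (rule ccontr)
  assume "x \<noteq> y"
  have "p dvd (x - y)" using assms(4) by (simp add: cong_iff_dvd_diff)
  then have "\<bar>p\<bar> \<le> \<bar>x - y\<bar>" using \<open>x\<noteq>y\<close> dvd_imp_le_int by simp
  then show False using assms by linarith
qed

lemma euler_int:
  fixes p :: int
  assumes "prime p" "p > 2"
  shows "[Legendre a p = a ^ nat ((p - 1) div 2)] (mod p)"
proof -
  have pn: "int (nat p) = p" using assms by simp
  have "prime (nat p)" using assms(1) pn prime_int_nat_transfer[of "nat p"] by simp
  moreover have "2 < nat p" using assms by simp
  ultimately have "[Legendre a (int (nat p)) = a ^ ((nat p - 1) div 2)] (mod int (nat p))"
    by (rule euler_criterion)
  moreover have "(nat p - 1) div 2 = nat ((p - 1) div 2)"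
  proof -
    have "nat ((p - 1) div 2) = nat (p - 1) div nat 2" using assms(2) by (simp add: nat_div_distrib)
    moreover have "nat (p - 1) = nat p - 1" using assms(2) by simp
    ultimately show ?thesis by simp
  qed
  ultimately show ?thesis using pn by simp
qed

lemma legendre_mult:
  fixes p :: int
  assumes "prime p" "p > 2"
  shows "Legendre (a*b) p = Legendre a p * Legendre b p"
proof -
  let ?k = "nat ((p - 1) div 2)"
  have "[Legendre (a*b) p = (a*b) ^ ?k] (mod p)" by (rule euler_int[OF assms])
  moreover have "[Legendre a p * Legendre b p = a ^ ?k * b ^ ?k] (mod p)"
    using euler_int[OF assms, of a] euler_int[OF assms, of b] by (rule cong_mult)
  ultimately have "[Legendre (a*b) p = Legendre a p * Legendre b p] (mod p)"
    unfolding power_mult_distrib using cong_sym cong_trans by blast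
  moreover have "\<bar>Legendre (a*b) p\<bar> \<le> 1" using legendre_range[of "a*b" p] by auto
  moreover have "\<bar>Legendre a p * Legendre b p\<bar> \<le> 1"
    using legendre_range[of a p] legendre_range[of b p] by (auto simp: abs_mult)
  ultimately show ?thesis using small_cong_eq assms(2) by blast
qed

lemma legendre_minus_one:
  fixes p :: int
  assumes "prime p" "p > 2"
  shows "Legendre (-1) p = (-1) ^ nat ((p - 1) div 2)"
proof -
  have "[Legendre (-1) p = (-1) ^ nat ((p - 1) div 2)] (mod p)" by (rule euler_int[OF assms])
  moreover have "\<bar>Legendre (-1) p\<bar> \<le> 1" using legendre_range[of "-1" p] by auto
  moreover have "\<bar>(-1::int) ^ nat ((p - 1) div 2)\<bar> \<le> 1" by (simp add: power_abs)
  ultimately show ?thesis using small_cong_eq assms(2) by blast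
qed

lemma legendre_cong:
  assumes "[a = b] (mod p)"
  shows "Legendre a p = Legendre b p"
proof -
  have "[a = 0] (mod p) \<longleftrightarrow> [b = 0] (mod p)" using assms cong_sym cong_trans by blast
  moreover have "QuadRes p a \<longleftrightarrow> QuadRes p b" unfolding QuadRes_def using assms cong_sym cong_trans by blast
  ultimately show ?thesis by (simp add: Legendre_def)
qed

lemma legendre_square:
  fixes p x :: int
  assumes "prime p" "\<not> p dvd x"
  shows "Legendre (x^2) p = 1"
proof -
  have "\<not> [x^2 = 0] (mod p)"
    using assms by (simp add: cong_0_iff prime_dvd_power_iff)
  moreover have "QuadRes p (x^2)" unfolding QuadRes_def by (auto intro: cong_refl)
  ultimately show ?thesis by (simp add: Legendre_def)
qed

lemma legendre_nonzero:
  fixes p x :: int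
  assumes "Legendre x p = 1"
  shows "\<not> p dvd x"
  using assms by (auto simp: Legendre_def cong_0_iff)



lemma legendre_prime_q:
  fixes p q s :: int
  assumes "prime p" "p > 2" "prime q" "q > 2" "p \<noteq> q" "[s^2 = -4*p] (mod q)"
  shows "Legendre q p = (if q mod 4 = 1 then 1 else (-1) ^ nat ((p+1) div 2))"
proof -
  have q2: "\<not> q dvd 2" using assms(4) by (auto dest: zdvd_imp_le)
  have nqp: "\<not> q dvd p"
  proof
    assume "q dvd p"
    moreover have "\<forall>m. 0 \<le> m \<and> m dvd p \<longrightarrow> m = 1 \<or> m = p" using assms(1) by (simp add: prime_int_iff)
    moreover have "0 \<le> q" using assms(4) by simp
    ultimately have "q = 1 \<or> q = p" by blast
    then show False using assms by auto
  qed
  have nq: "\<not> q dvd (-4*p)"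
  proof
    assume "q dvd (-4*p)"
    then have "q dvd (2*2) * p" by simp
    then have "q dvd 2 \<or> q dvd p" using assms(3) prime_dvd_mult_iff by blast
    then show False using q2 nqp by blast
  qed
  have "Legendre (-4*p) q = 1"
  proof -
    have "\<not> [-4*p = 0] (mod q)" using nq by (simp add: cong_0_iff)
    moreover have "QuadRes q (-4*p)" unfolding QuadRes_def using assms(6) by blast
    ultimately show ?thesis by (simp add: Legendre_def)
  qed
  moreover have "Legendre (-4*p) q = Legendre (-1) q * Legendre (2^2) q * Legendre p q"
  proof -
    have "-4*p = ((-1) * 2^2) * p" by simp
    then show ?thesis using legendre_mult[OF assms(3,4)] by metis
  qed
  moreover have "Legendre (2^2) q = 1" using legendre_square[OF assms(3) q2] .
  moreover have lq: "Legendre (-1) q = (-1) ^ nat ((q - 1) div 2)" by (rule legendre_minus_one[OF assms(3,4)])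
  ultimately have lpq: "Legendre p q = (-1) ^ nat ((q - 1) div 2)"
    by (auto simp: minus_one_power_iff split: if_splits)
  have qr: "Legendre p q * Legendre q p = (-1::int) ^ (nat ((p - 1) div 2 * ((q - 1) div 2)))"
    using Quadratic_Reciprocity_int[of p q] assms by simp
  have oddp: "odd p" using assms(1,2) by (simp add: prime_odd_int)
  have oddq: "odd q" using assms(3,4) by (simp add: prime_odd_int)
  have n1: "nat ((p - 1) div 2 * ((q - 1) div 2)) = nat ((p - 1) div 2) * nat ((q - 1) div 2)"
    using assms(2,4) by (simp add: nat_mult_distrib)
  show ?thesis
  proof (cases "q mod 4 = 1")
    case True
    then have "even ((q - 1) div 2)" by presburger
    then have ev: "even (nat ((q - 1) div 2))" using assms(4) by (simp add: even_nat_iff)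
    then have e1: "Legendre p q = 1" using lpq by (simp add: minus_one_power_iff)
    have "even (nat ((p - 1) div 2 * ((q - 1) div 2)))" using ev n1 by simp
    then show ?thesis using qr e1 True by (simp add: minus_one_power_iff)
  next
    case False
    then have q3: "q mod 4 = 3" using oddq by presburger
    then have "odd ((q - 1) div 2)" by presburger
    then have od: "odd (nat ((q - 1) div 2))" using assms(4) by (simp add: even_nat_iff)
    then have e1: "Legendre p q = -1" using lpq by (simp add: minus_one_power_iff)
    have "even (nat ((p - 1) div 2 * ((q - 1) div 2))) \<longleftrightarrow> even (nat ((p-1) div 2))"
      using od n1 by simp
    moreover have "even (nat ((p+1) div 2)) \<longleftrightarrow> odd (nat ((p-1) div 2))"
    proof -
      have "(p+1) div 2 = (p-1) div 2 + 1" by presburger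
      moreover have "(p-1) div 2 \<ge> 0" using assms(2) by simp
      ultimately have "nat ((p+1) div 2) = nat ((p-1) div 2) + 1" by (simp add: nat_add_distrib)
      then show ?thesis by simp
    qed
    ultimately show ?thesis using qr e1 False by (auto simp add: minus_one_power_iff)
  qed
qed

lemma legendre_one: 
  assumes "prime (p::int)" shows "Legendre 1 p = 1"
proof -
  have "p > 1" using assms by (rule prime_gt_1_int)
  then have "\<not> p dvd 1" by auto
  then show ?thesis using legendre_square[OF assms, of 1] by simp
qed

lemma legendre_recip:
  fixes p m s :: int
  assumes "prime p" "p > 2" "m > 0" "odd m" "\<not> p dvd m" "[s^2 = -4*p] (mod m)"
  shows "Legendre m p = (if m mod 4 = 1 then 1 else (-1) ^ nat ((p+1) div 2))"
  using assms(3-6)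
proof (induction "nat m" arbitrary: m rule: less_induct)
  case less
  define e :: int where "e = (-1) ^ nat ((p+1) div 2)"
  have e2: "e * e = 1" unfolding e_def by (simp add: minus_one_power_iff)
  show ?case
  proof (cases "m = 1")
    case True
    then show ?thesis using legendre_one[OF assms(1)] by simp
  next
    case False
    then have "\<bar>m\<bar> \<noteq> 1" using less.prems(1) by simp
    then obtain q where q: "prime q" "q dvd m" using prime_factor_int by blast
    then obtain m' where m': "m = q * m'" by (auto elim: dvdE)
    have q1: "q > 1" using q(1) by (simp add: prime_gt_1_int)
    have q2: "q \<noteq> 2" using q(2) less.prems(2) by auto
    have q3: "q > 2" using q1 q2 by simp
    have qp: "q \<noteq> p" using q(2) less.prems(3) by auto
    have m'pos: "m' > 0" using m' less.prems(1) q1 by (simp add: zero_less_mult_iff)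
    have m'lt: "m' < m" using m' m'pos q1 by simp
    have m'odd: "odd m'" using m' less.prems(2) by simp
    have m'p: "\<not> p dvd m'" using m' less.prems(3) by auto
    have m'c: "[s^2 = -4*p] (mod m')" using less.prems(4) m' cong_dvd_modulus by (metis dvd_triv_right)
    have qc: "[s^2 = -4*p] (mod q)" using less.prems(4) m' cong_dvd_modulus by (metis dvd_triv_left)
    have IH: "Legendre m' p = (if m' mod 4 = 1 then 1 else e)"
      unfolding e_def using less.hyps[of m'] m'lt m'pos m'odd m'p m'c by simp
    have Lq: "Legendre q p = (if q mod 4 = 1 then 1 else e)"
      unfolding e_def using legendre_prime_q[OF assms(1,2) q(1) q3 qp[symmetric] qc] .
    have Lm: "Legendre m p = Legendre q p * Legendre m' p" using m' legendre_mult[OF assms(1,2)] by simp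
    have oq: "odd q" using q(2) less.prems(2) by (auto dest: dvd_trans)
    have mm: "m mod 4 = ((q mod 4) * (m' mod 4)) mod 4" using m' by (simp add: mod_mult_eq)
    have "q mod 4 = 1 \<or> q mod 4 = 3" using oq by presburger
    moreover have "m' mod 4 = 1 \<or> m' mod 4 = 3" using m'odd by presburger
    ultimately show ?thesis using Lm IH Lq mm e2 unfolding e_def[symmetric] by auto
  qed
qed



definition rho :: "int \<Rightarrow> int \<Rightarrow> int \<Rightarrow> int \<Rightarrow> int \<Rightarrow> int" where
  "rho a t b x y = a*x^2 + 2*t*x*y + b*y^2"

definition good :: "int \<Rightarrow> int \<Rightarrow> bool" where
  "good p u \<longleftrightarrow> u mod 4 = 1 \<and> Legendre u p = 1"

lemma rho_comp: "rho a t b (x*u - t*x* v - b*y* v) (y*u + a*x* v + t*y* v) = rho a t b x y * (u^2 + (a*b-t^2)* v^2)"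
  unfolding rho_def power2_eq_square by (simp add: algebra_simps)

lemma rho_cauchy: "rho a t b 1 y0 * rho a t b x y = (a*x + t*(y + y0*x) + b*y0*y)^2 + (a*b-t^2)*(y - y0*x)^2"
  unfolding rho_def power2_eq_square by (simp add: algebra_simps)

lemma rho_a: "a * rho a t b x y = (a*x + t*y)^2 + (a*b-t^2)*y^2"
  unfolding rho_def power2_eq_square by (simp add: algebra_simps)

lemma odd_sq_mod4: "odd (x::int) \<Longrightarrow> x^2 mod 4 = 1"
proof -
  assume "odd x"
  then obtain k where "x = 2*k+1" by (auto elim: oddE)
  then have "x^2 = 4*(k^2+k) + 1" by (simp add: power2_eq_square algebra_simps)
  then show ?thesis by (simp add: mod_add_eq[symmetric])
qed

lemma good_coprime:
  assumes "prime p" "good p u"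
  shows "coprime u (16*p)"
proof -
  have "odd u" using assms(2) unfolding good_def by presburger
  then have c2: "coprime u 2" by simp
  then have c16: "coprime u 16" using coprime_power_right_iff[of u 2 4] by simp
  have "\<not> p dvd u" using assms(2) unfolding good_def by (intro legendre_nonzero) simp
  then have "coprime p u" by (rule prime_imp_coprime[OF assms(1)])
  then show ?thesis using c16 by (simp add: coprime_commute)
qed

lemma coprime16_odd: "coprime (u::int) (16*p) \<Longrightarrow> odd u"
proof -
  assume "coprime u (16*p)"
  then have "coprime u 16" by simp
  then have "coprime u (2*8)" by simp
  then have "coprime u 2" by (simp only: coprime_mult_right_iff)
  then show "odd u" by simp
qed

lemma coprime16_p: "prime p \<Longrightarrow> coprime (u::int) (16*p) \<Longrightarrow> \<not> p dvd u"
proof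
  assume "prime p" "coprime u (16*p)" "p dvd u"
  then have "coprime u p" by simp
  then show False using \<open>p dvd u\<close> \<open>prime p\<close> by (metis coprime_absorb_right not_prime_unit)
qed

lemma principal_good:
  assumes "prime p" "coprime (x^2 + 4*p*y^2) (16*p)"
  shows "good p (x^2 + 4*p*y^2)"
proof -
  have "odd (x^2 + 4*p*y^2)" using assms(2) by (rule coprime16_odd)
  then have ox: "odd x" by simp
  then have "x^2 mod 4 = 1" by (rule odd_sq_mod4)
  then have m4: "(x^2 + 4*p*y^2) mod 4 = 1" using mod_add_eq[of "x^2" 4 "4*p*y^2"] by simp
  have np: "\<not> p dvd (x^2 + 4*p*y^2)" using coprime16_p assms by blast
  have "\<not> p dvd x"
  proof
    assume "p dvd x"
    then have "p dvd x^2" by (simp add: power2_eq_square)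
    then have "p dvd x^2 + 4*p*y^2" by simp
    with np show False by blast
  qed
  then have "Legendre (x^2) p = 1" using legendre_square assms(1) by blast
  moreover have "[x^2 + 4*p*y^2 = x^2] (mod p)" by (simp add: cong_iff_dvd_diff)
  ultimately have "Legendre (x^2 + 4*p*y^2) p = 1" using legendre_cong by metis
  then show ?thesis using m4 unfolding good_def by simp
qed

lemma mod16_rep:
  fixes u p :: int
  assumes "u mod 4 = 1" "odd p"
  shows "\<exists>s y. [s^2 + 4*p*y^2 = u] (mod 16)"
proof -
  have u16: "u mod 16 = 1 \<or> u mod 16 = 5 \<or> u mod 16 = 9 \<or> u mod 16 = 13" using assms(1) by presburger
  have p4: "p mod 4 = 1 \<or> p mod 4 = 3" using assms(2) by presburger
  have c1: "[1^2 + 4*p*0^2 = u] (mod 16)" if "u mod 16 = 1" using that unfolding cong_def by simp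
  have c2: "[3^2 + 4*p*0^2 = u] (mod 16)" if "u mod 16 = 9" using that unfolding cong_def by simp
  have c3: "[1^2 + 4*p*1^2 = u] (mod 16)" if "u mod 16 = 5" "p mod 4 = 1" using that unfolding cong_def by simp presburger
  have c4: "[3^2 + 4*p*1^2 = u] (mod 16)" if "u mod 16 = 5" "p mod 4 = 3" using that unfolding cong_def by simp presburger
  have c5: "[3^2 + 4*p*1^2 = u] (mod 16)" if "u mod 16 = 13" "p mod 4 = 1" using that unfolding cong_def by simp presburger
  have c6: "[1^2 + 4*p*1^2 = u] (mod 16)" if "u mod 16 = 13" "p mod 4 = 3" using that unfolding cong_def by simp presburger
  show ?thesis using u16 p4 c1 c2 c3 c4 c5 c6 by blast
qed

lemma principal_cover:
  fixes p u :: int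
  assumes "prime p" "p > 2" "good p u"
  shows "\<exists>x y. [x^2 + 4*p*y^2 = u] (mod 16*p)"
proof -
  have "Legendre u p = 1" "u mod 4 = 1" using assms(3) unfolding good_def by auto
  then have "QuadRes p u" unfolding Legendre_def by (auto split: if_splits)
  then obtain r where r: "[r^2 = u] (mod p)" unfolding QuadRes_def by blast
  have op: "odd p" using assms(1,2) by (simp add: prime_odd_int)
  obtain s y where sy: "[s^2 + 4*p*y^2 = u] (mod 16)" using mod16_rep[OF \<open>u mod 4 = 1\<close> op] by blast
  have "coprime p 2" using op by simp
  then have cp: "coprime p 16" using coprime_power_right_iff[of p 2 4] by simp
  obtain x where x: "[x = r] (mod p)" "[x = s] (mod 16)" using binary_chinese_remainder_int[OF cp] by blast
  have "[x^2 + 4*p*y^2 = r^2 + 0] (mod p)"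
    using x(1) by (intro cong_add cong_pow) (auto simp: cong_0_iff)
  then have m1: "[x^2 + 4*p*y^2 = u] (mod p)" using r by (simp add: cong_trans)
  have "[x^2 + 4*p*y^2 = s^2 + 4*p*y^2] (mod 16)"
    using x(2) by (intro cong_add cong_pow cong_refl)
  then have m2: "[x^2 + 4*p*y^2 = u] (mod 16)" using sy by (rule cong_trans)
  have "[x^2 + 4*p*y^2 = u] (mod p * 16)" using coprime_cong_mult[OF m1 m2 cp] .
  then show ?thesis by (auto simp: mult.commute)
qed




lemma prime_not_dvd4: "prime (p::int) \<Longrightarrow> p > 2 \<Longrightarrow> \<not> p dvd 4"
proof
  assume "prime p" "p > 2" "p dvd 4"
  then have "p dvd 2*2" by simp
  then have "p dvd 2" using \<open>prime p\<close> prime_dvd_mult_iff by blast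
  then have "p \<le> 2" by (rule zdvd_imp_le) simp
  then show False using \<open>p > 2\<close> by simp
qed

lemma not_all_dvd:
  fixes p a t b :: int
  assumes "prime p" "p > 2" "a*b - t^2 = 4*p" "p dvd a" "p dvd t" "p dvd b"
  shows False
proof -
  obtain a' where "a = p*a'" using assms(4) by (auto elim: dvdE)
  moreover obtain b' where "b = p*b'" using assms(6) by (auto elim: dvdE)
  moreover obtain t' where "t = p*t'" using assms(5) by (auto elim: dvdE)
  ultimately have "p * (p*(a'*b' - t'^2)) = p * 4" using assms(3) by (simp add: power2_eq_square algebra_simps)
  then have "p*(a'*b' - t'^2) = 4" using assms(2) by simp
  then have "p dvd 4" by (rule dvdI[OF sym])
  then show False using prime_not_dvd4 assms(1,2) by blast
qed

context
  fixes p a t b :: int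
  assumes pp: "prime p" and p2: "p > 2" and apos: "a > 0" and dt: "a*b - t^2 = 4*p" and a1: "a mod 4 = 1"
begin

lemma aodd: "odd a" using a1 by presburger

lemma val_mod4:
  assumes "odd (rho a t b x y)"
  shows "rho a t b x y mod 4 = 1"
proof -
  let ?r = "rho a t b x y"
  have e: "a * ?r = (a*x + t*y)^2 + 4*p*y^2" using rho_a[of a t b x y] dt by simp
  have "odd (a * ?r)" using assms aodd by simp
  then have "odd (a*x + t*y)" using e by auto
  then have "(a*x + t*y)^2 mod 4 = 1" by (rule odd_sq_mod4)
  then have "(a * ?r) mod 4 = 1" using e mod_add_eq[of "(a*x + t*y)^2" 4 "4*p*y^2"] by simp
  moreover have "(a * ?r) mod 4 = ((a mod 4) * (?r mod 4)) mod 4" by (simp add: mod_mult_eq)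
  ultimately show ?thesis using a1 by simp
qed

lemma m0_pos: "rho a t b 1 y0 > 0"
proof -
  have e: "a * rho a t b 1 y0 = (a + t*y0)^2 + 4*p*y0^2" using rho_a[of a t b 1 y0] dt by simp
  have "a * rho a t b 1 y0 > 0"
  proof (cases "y0 = 0")
    case True then show ?thesis using e apos by simp
  next
    case False
    then have "4*p*y0^2 > 0" using p2 by simp
    moreover have "(a + t*y0)^2 \<ge> 0" by simp
    ultimately show ?thesis using e by linarith
  qed
  then show ?thesis using apos by (simp add: zero_less_mult_iff)
qed

lemma exists_y0: "\<exists>y0. even y0 \<and> \<not> p dvd rho a t b 1 y0"
proof (rule ccontr)
  assume "\<not> ?thesis"
  then have d0: "p dvd rho a t b 1 0" and d2: "p dvd rho a t b 1 2" and d4: "p dvd rho a t b 1 4" by auto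
  have ha: "p dvd a" using d0 by (simp add: rho_def)
  have "rho a t b 1 2 = a + 4*(t+b)" by (simp add: rho_def)
  then have "p dvd 4*(t+b)" using d2 ha by (simp add: dvd_add_right_iff)
  moreover have "coprime p 4" using prime_not_dvd4 pp p2 by (simp add: prime_imp_coprime)
  ultimately have h1: "p dvd t + b" by (metis coprime_dvd_mult_right_iff)
  have "rho a t b 1 4 = a + 8*(t+2*b)" by (simp add: rho_def)
  then have "p dvd 8*(t+2*b)" using d4 ha by (simp add: dvd_add_right_iff)
  moreover have "coprime p 8"
  proof -
    have "coprime p (2*2)" using \<open>coprime p 4\<close> by simp
    then have "coprime p 2" by (simp only: coprime_mult_right_iff)
    then show ?thesis using coprime_power_right_iff[of p 2 3] by simp
  qed
  ultimately have h2: "p dvd t + 2*b" by (metis coprime_dvd_mult_right_iff)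
  have "b = (t + 2*b) - (t + b)" by simp
  then have hb: "p dvd b" using h1 h2 dvd_diff by metis
  have "t = (t + b) - b" by simp
  then have ht: "p dvd t" using h1 hb dvd_diff by metis
  show False using not_all_dvd[OF pp p2 dt ha ht hb] .
qed

lemma m0_good:
  assumes "even y0" "\<not> p dvd rho a t b 1 y0"
  shows "good p (rho a t b 1 y0)"
proof -
  let ?m = "rho a t b 1 y0"
  obtain k where k: "y0 = 2*k" using assms(1) by (auto elim: evenE)
  have "?m = a + 2*(2*t*k + 2*b*k^2)" using k by (simp add: rho_def power2_eq_square algebra_simps)
  then have om: "odd ?m" using aodd by simp
  then have m4: "?m mod 4 = 1" by (rule val_mod4)
  have "(t + b*y0)^2 - (-4*p) = ?m * b"
    using dt by (simp add: rho_def power2_eq_square algebra_simps)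
  then have "[(t + b*y0)^2 = -4*p] (mod ?m)" by (simp add: cong_iff_dvd_diff)
  then have "Legendre ?m p = 1"
    using legendre_recip[OF pp p2 m0_pos om assms(2)] m4 by simp
  then show ?thesis using m4 unfolding good_def by simp
qed

lemma val_good:
  assumes "coprime (rho a t b x y) (16*p)"
  shows "good p (rho a t b x y)"
proof -
  let ?r = "rho a t b x y"
  obtain y0 where y0: "even y0" "\<not> p dvd rho a t b 1 y0" using exists_y0 by blast
  let ?m = "rho a t b 1 y0"
  let ?W = "a*x + t*(y + y0*x) + b*y0*y"
  have Lm: "Legendre ?m p = 1" using m0_good[OF y0] unfolding good_def by simp
  have nr: "\<not> p dvd ?r" using coprime16_p pp assms by blast
  have nmr: "\<not> p dvd ?m * ?r" using nr y0(2) pp by (simp add: prime_dvd_mult_iff)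
  have e: "?m * ?r = ?W^2 + 4*p*(y - y0*x)^2" using rho_cauchy[of a t b y0 x y] dt by simp
  have c: "[?m * ?r = ?W^2] (mod p)" using e by (simp add: cong_iff_dvd_diff)
  have nW: "\<not> p dvd ?W"
  proof
    assume "p dvd ?W"
    then have "p dvd ?W^2" by (simp add: power2_eq_square)
    then have "p dvd ?m * ?r" using e by simp
    then show False using nmr by blast
  qed
  have "Legendre (?m * ?r) p = 1" using legendre_cong[OF c] legendre_square[OF pp nW] by simp
  then have "Legendre ?r p = 1" using legendre_mult[OF pp p2, of ?m ?r] Lm by simp
  moreover have "?r mod 4 = 1" using val_mod4 coprime16_odd assms by blast
  ultimately show ?thesis unfolding good_def by simp
qed

lemma rho_cover:
  assumes "good p u"
  shows "\<exists>x y. [rho a t b x y = u] (mod 16*p)"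
proof -
  obtain y0 where y0: "even y0" "\<not> p dvd rho a t b 1 y0" using exists_y0 by blast
  let ?m = "rho a t b 1 y0"
  have gm: "good p ?m" using m0_good[OF y0] .
  have cm: "coprime ?m (16*p)" using good_coprime[OF pp gm] .
  obtain i where i: "[?m * i = 1] (mod 16*p)" using cong_solve_coprime_int[OF cm] by blast
  have i4: "[?m * i = 1] (mod 4)" using i by (rule cong_dvd_modulus) simp
  have ip: "[?m * i = 1] (mod p)" using i by (rule cong_dvd_modulus) simp
  have "(?m * i) mod 4 = 1" using i4 unfolding cong_def by simp
  moreover have "(?m * i) mod 4 = ((?m mod 4) * (i mod 4)) mod 4" by (simp add: mod_mult_eq)
  ultimately have "i mod 4 = 1" using gm unfolding good_def by simp
  moreover have "Legendre i p = 1"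
  proof -
    have "Legendre (?m * i) p = Legendre 1 p" using legendre_cong[OF ip] .
    then have "Legendre ?m p * Legendre i p = 1" using legendre_mult[OF pp p2] legendre_one[OF pp] by simp
    then show ?thesis using gm unfolding good_def by simp
  qed
  ultimately have gi: "good p i" unfolding good_def by simp
  have giu: "good p (i*u)"
  proof -
    have "(i*u) mod 4 = ((i mod 4) * (u mod 4)) mod 4" by (simp add: mod_mult_eq)
    then have "(i*u) mod 4 = 1" using gi assms unfolding good_def by simp
    moreover have "Legendre (i*u) p = 1" using gi assms legendre_mult[OF pp p2] unfolding good_def by simp
    ultimately show ?thesis unfolding good_def by simp
  qed
  obtain X Y where XY: "[X^2 + 4*p*Y^2 = i*u] (mod 16*p)" using principal_cover[OF pp p2 giu] by blast
  let ?x = "1*X - t*1*Y - b*y0*Y"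
  let ?y = "y0*X + a*1*Y + t*y0*Y"
  have "rho a t b ?x ?y = ?m * (X^2 + 4*p*Y^2)" using rho_comp[of a t b 1 X Y y0] dt by simp
  moreover have "[?m * (X^2 + 4*p*Y^2) = ?m * (i*u)] (mod 16*p)" using XY by (intro cong_mult cong_refl)
  moreover have "[?m * (i*u) = 1 * u] (mod 16*p)" using i unfolding mult.assoc[symmetric] by (intro cong_mult cong_refl)
  ultimately have "[rho a t b ?x ?y = u] (mod 16*p)" by (metis cong_trans mult_1)
  then show ?thesis by blast
qed

lemma genus_principal: "in_principal_genus p (a, 2*t, b)"
proof -
  have D1: "(2*t)^2 - 4*a*b = -(16*p)" using dt by (simp add: power2_eq_square algebra_simps)
  have D2: "(0::int)^2 - 4*1*(4*p) = -(16*p)" by simp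
  have bq1: "bqf a (2*t) b x y = rho a t b x y" for x y by (simp add: bqf_def rho_def)
  have bq2: "bqf 1 0 (4*p) x y = x^2 + 4*p*y^2" for x y by (simp add: bqf_def)
  have ab: "\<bar>-(16*p)\<bar> = 16*p" using p2 by simp
  let ?G = "{r. \<exists>u. good p u \<and> r = u mod (16*p)}"
  have U1: "unit_values a (2*t) b (-(16*p)) = ?G"
  proof
    show "unit_values a (2*t) b (-(16*p)) \<subseteq> ?G"
      unfolding unit_values_def ab bq1 using val_good by auto
    show "?G \<subseteq> unit_values a (2*t) b (-(16*p))"
    proof
      fix r assume "r \<in> ?G"
      then obtain u where u: "good p u" "r = u mod (16*p)" by blast
      obtain x y where xy: "[rho a t b x y = u] (mod 16*p)" using rho_cover[OF u(1)] by blast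
      have "coprime u (16*p)" using good_coprime[OF pp u(1)] .
      then have "coprime (rho a t b x y) (16*p)" using cong_imp_coprime cong_sym xy by blast
      moreover have "r = rho a t b x y mod (16*p)" using xy u(2) unfolding cong_def by simp
      ultimately show "r \<in> unit_values a (2*t) b (-(16*p))"
        unfolding unit_values_def ab bq1 by auto
    qed
  qed
  have U2: "unit_values 1 0 (4*p) (-(16*p)) = ?G"
  proof
    show "unit_values 1 0 (4*p) (-(16*p)) \<subseteq> ?G"
      unfolding unit_values_def ab bq2 using principal_good[OF pp] by auto
    show "?G \<subseteq> unit_values 1 0 (4*p) (-(16*p))"
    proof
      fix r assume "r \<in> ?G"
      then obtain u where u: "good p u" "r = u mod (16*p)" by blast
      obtain x y where xy: "[x^2 + 4*p*y^2 = u] (mod 16*p)" using principal_cover[OF pp p2 u(1)] by blast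
      have "coprime u (16*p)" using good_coprime[OF pp u(1)] .
      then have "coprime (x^2 + 4*p*y^2) (16*p)" using cong_imp_coprime cong_sym xy by blast
      moreover have "r = (x^2 + 4*p*y^2) mod (16*p)" using xy u(2) unfolding cong_def by simp
      ultimately show "r \<in> unit_values 1 0 (4*p) (-(16*p))"
        unfolding unit_values_def ab bq2 by auto
    qed
  qed
  show ?thesis unfolding in_principal_genus_def same_genus_def using U1 U2 D1 D2 by simp
qed

end



lemma mat3_eq: "(A::'a^3^3) = B \<longleftrightarrow> (\<forall>i j. A$i$j = B$i$j)"
  by (simp add: vec_eq_iff)

lemma three_num: "(4::3) = 1" "(5::3) = 2" by simp_all

lemma cof3_nth:
  "cof3 A $1$1 = A$2$2*A$3$3 - A$2$3*A$3$2"
  "cof3 A $1$2 = A$2$3*A$3$1 - A$2$1*A$3$3"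
  "cof3 A $1$3 = A$2$1*A$3$2 - A$2$2*A$3$1"
  "cof3 A $2$1 = A$3$2*A$1$3 - A$3$3*A$1$2"
  "cof3 A $2$2 = A$3$3*A$1$1 - A$3$1*A$1$3"
  "cof3 A $2$3 = A$3$1*A$1$2 - A$3$2*A$1$1"
  "cof3 A $3$1 = A$1$2*A$2$3 - A$1$3*A$2$2"
  "cof3 A $3$2 = A$1$3*A$2$1 - A$1$1*A$2$3"
  "cof3 A $3$3 = A$1$1*A$2$2 - A$1$2*A$2$1"
  by (simp_all add: cof3_def three_num)

lemma mm3: "((A::int^3^'n) ** (B::int^'m^3))$i$j = A$i$1*B$1$j + A$i$2*B$2$j + A$i$3*B$3$j"
  by (simp add: matrix_matrix_mult_def sum_3)

lemma cof3_mult: "cof3 ((A::int^3^3) ** B) = cof3 A ** cof3 B"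
  unfolding mat3_eq forall_3 by (simp add: cof3_nth mm3; simp add: algebra_simps)

lemma cof3_transpose: "cof3 (transpose (A::int^3^3)) = transpose (cof3 A)"
  unfolding mat3_eq forall_3 by (simp add: cof3_nth transpose_def; simp add: algebra_simps)

lemma adj3: "((A::int^3^3) ** transpose (cof3 A))$i$j = (if i = j then det A else 0)"
  using exhaust_3[of i] exhaust_3[of j] by (elim disjE; simp add: cof3_nth mm3 det_3 transpose_def algebra_simps)

definition canon :: "int \<Rightarrow> int \<Rightarrow> int \<Rightarrow> int \<Rightarrow> int \<Rightarrow> int \<Rightarrow> int^3^3" where
  "canon a t b X Y Z = vector [vector [a,t,X], vector [t,b,Y], vector [X,Y,Z]]"

lemma canon_nth:
  "canon a t b X Y Z $1$1 = a" "canon a t b X Y Z $1$2 = t" "canon a t b X Y Z $1$3 = X"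
  "canon a t b X Y Z $2$1 = t" "canon a t b X Y Z $2$2 = b" "canon a t b X Y Z $2$3 = Y"
  "canon a t b X Y Z $3$1 = X" "canon a t b X Y Z $3$2 = Y" "canon a t b X Y Z $3$3 = Z"
  by (simp_all add: canon_def)

definition cmat :: "int \<Rightarrow> int \<Rightarrow> int \<Rightarrow> int \<Rightarrow> int \<Rightarrow> int^3^3" where
  "cmat a t b w1 w2 = vector [vector [b + w1^2, w1*w2 - t, -2*w1], vector [w1*w2 - t, a + w2^2, -2*w2], vector [-2*w1, -2*w2, 4]]"

lemma cmat_nth:
  "cmat a t b w1 w2 $1$1 = b + w1^2" "cmat a t b w1 w2 $1$2 = w1*w2 - t" "cmat a t b w1 w2 $1$3 = -2*w1"
  "cmat a t b w1 w2 $2$1 = w1*w2 - t" "cmat a t b w1 w2 $2$2 = a + w2^2" "cmat a t b w1 w2 $2$3 = -2*w2"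
  "cmat a t b w1 w2 $3$1 = -2*w1" "cmat a t b w1 w2 $3$2 = -2*w2" "cmat a t b w1 w2 $3$3 = 4"
  by (simp_all add: cmat_def)

context
  fixes p a t b X Y Z w1 w2 :: int
  assumes dt: "a*b - t^2 = 4*p" and hX: "2*X = a*w1 + t*w2" and hY: "2*Y = t*w1 + b*w2"
    and hZ: "4*Z = 4*p + a*w1^2 + 2*t*w1*w2 + b*w2^2"
begin

lemma canon_cof_entries:
  "b*Z - Y*Y = p*(b + w1^2)"
  "Y*X - t*Z = p*(w1*w2 - t)"
  "t*Y - b*X = p*(-2*w1)"
  "Z*a - X*X = p*(a + w2^2)"
  "X*t - Y*a = p*(-2*w2)"
  "a*b - t*t = p*4"
proof -
  have f1: "b*(4*Z) = b*(4*p + a*w1^2 + 2*t*w1*w2 + b*w2^2)" using hZ by simp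
  have f2: "(2*Y)*(2*Y) = (t*w1 + b*w2)*(t*w1 + b*w2)" using hY by simp
  have f3: "(a*b - t^2)*w1^2 = 4*p*w1^2" using dt by simp
  have "4*(b*Z - Y*Y) = 4*(p*(b + w1^2))" using f1 f2 f3 by (simp add: algebra_simps power2_eq_square)
  then show "b*Z - Y*Y = p*(b + w1^2)" by simp
  have g1: "(2*X)*(2*Y) = (a*w1 + t*w2)*(t*w1 + b*w2)" using hX hY by simp
  have g2: "t*(4*Z) = t*(4*p + a*w1^2 + 2*t*w1*w2 + b*w2^2)" using hZ by simp
  have g3: "(a*b - t^2)*w1*w2 = 4*p*w1*w2" using dt by simp
  have "4*(Y*X - t*Z) = 4*(p*(w1*w2 - t))" using g1 g2 g3 by (simp add: algebra_simps power2_eq_square)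
  then show "Y*X - t*Z = p*(w1*w2 - t)" by simp
  have h1: "t*(2*Y) = t*(t*w1 + b*w2)" using hY by simp
  have h2: "b*(2*X) = b*(a*w1 + t*w2)" using hX by simp
  have h3: "(a*b - t^2)*w1 = 4*p*w1" using dt by simp
  have "2*(t*Y - b*X) = 2*(p*(-2*w1))" using h1 h2 h3 by (simp add: algebra_simps power2_eq_square)
  then show "t*Y - b*X = p*(-2*w1)" by simp
  have k1: "a*(4*Z) = a*(4*p + a*w1^2 + 2*t*w1*w2 + b*w2^2)" using hZ by simp
  have k2: "(2*X)*(2*X) = (a*w1 + t*w2)*(a*w1 + t*w2)" using hX by simp
  have k3: "(a*b - t^2)*w2^2 = 4*p*w2^2" using dt by simp
  have "4*(Z*a - X*X) = 4*(p*(a + w2^2))" using k1 k2 k3 by (simp add: algebra_simps power2_eq_square)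
  then show "Z*a - X*X = p*(a + w2^2)" by simp
  have l1: "t*(2*X) = t*(a*w1 + t*w2)" using hX by simp
  have l2: "a*(2*Y) = a*(t*w1 + b*w2)" using hY by simp
  have l3: "(a*b - t^2)*w2 = 4*p*w2" using dt by simp
  have "2*(X*t - Y*a) = 2*(p*(-2*w2))" using l1 l2 l3 by (simp add: algebra_simps power2_eq_square)
  then show "X*t - Y*a = p*(-2*w2)" by simp
  show "a*b - t*t = p*4" using dt by (simp add: power2_eq_square algebra_simps)
qed

lemma canon_cof: "cof3 (canon a t b X Y Z) $i$j = p * cmat a t b w1 w2 $i$j"
  using exhaust_3[of i] exhaust_3[of j] canon_cof_entries
  by (elim disjE; simp add: cof3_nth canon_nth cmat_nth algebra_simps)

lemma canon_det: "det (canon a t b X Y Z) = 4*p^2"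
proof -
  have "det (canon a t b X Y Z) = a*(b*Z - Y*Y) + t*(Y*X - t*Z) + X*(t*Y - b*X)"
    by (simp add: det_3 canon_nth algebra_simps)
  also have "\<dots> = a*(p*(b + w1^2)) + t*(p*(w1*w2 - t)) + X*(p*(-2*w1))"
    using canon_cof_entries by simp
  also have "\<dots> = 4*p^2"
  proof -
    have "X*(2*w1) = (2*X)*w1" by (simp add: algebra_simps)
    also have "\<dots> = (a*w1 + t*w2)*w1" by (simp only: hX)
    finally have "X*(2*w1) = (a*w1 + t*w2)*w1" .
    then have "p*(X*(2*w1)) = p*((a*w1 + t*w2)*w1)" by simp
    moreover have "p*(a*b - t^2) = p*(4*p)" using dt by simp
    ultimately show ?thesis by (simp add: algebra_simps power2_eq_square)
  qed
  finally show ?thesis .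
qed

end



lemma Gcd_ents_eqI:
  fixes A :: "int^3^3"
  assumes "g \<ge> 0" "\<And>i j. g dvd A$i$j" "\<And>c. (\<And>i j. c dvd A$i$j) \<Longrightarrow> c dvd g"
  shows "Gcd {A$i$j | i j. True} = g"
proof (rule Gcd_eqI)
  show "normalize g = g" using assms(1) by simp
  show "\<And>b. b \<in> {A$i$j | i j. True} \<Longrightarrow> g dvd b" using assms(2) by auto
  fix c assume H: "\<And>b. b \<in> {A$i$j | i j. True} \<Longrightarrow> c dvd b"
  show "c dvd g" by (rule assms(3), rule H, blast)
qed

lemma det_scale3: "det (\<chi> i j. c * (A::int^3^3)$i$j) = c^3 * det A"
  by (simp add: det_3 power3_eq_cube algebra_simps)

lemma det_cof3:
  assumes "det (A::int^3^3) \<noteq> 0"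
  shows "det (cof3 A) = det A ^ 2"
proof -
  have "A ** transpose (cof3 A) = (\<chi> i j. det A * (mat 1 :: int^3^3)$i$j)"
    unfolding mat3_eq using adj3 by (simp add: mat_def)
  then have "det A * det (cof3 A) = det A ^ 3 * det (mat 1 :: int^3^3)"
    using det_mul[of A "transpose (cof3 A)"] det_scale3[of "det A" "mat 1"] by simp
  then have "det A * det (cof3 A) = det A * det A ^ 2" by (simp add: power3_eq_cube power2_eq_square)
  then show ?thesis using assms by simp
qed

definition fmat :: "int \<Rightarrow> int \<Rightarrow> int \<Rightarrow> int \<Rightarrow> int \<Rightarrow> int^3^3" where
  "fmat f11 f12 f22 w1 w2 = vector [vector [f11, f12, -w1], vector [f12, f22, -w2], vector [-w1, -w2, 2]]"

lemma fmat_nth: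
  "fmat f11 f12 f22 w1 w2 $1$1 = f11" "fmat f11 f12 f22 w1 w2 $1$2 = f12" "fmat f11 f12 f22 w1 w2 $1$3 = -w1"
  "fmat f11 f12 f22 w1 w2 $2$1 = f12" "fmat f11 f12 f22 w1 w2 $2$2 = f22" "fmat f11 f12 f22 w1 w2 $2$3 = -w2"
  "fmat f11 f12 f22 w1 w2 $3$1 = -w1" "fmat f11 f12 f22 w1 w2 $3$2 = -w2" "fmat f11 f12 f22 w1 w2 $3$3 = 2"
  by (simp_all add: fmat_def)

definition Memb :: "int^2^3" where "Memb = vector [vector [1,0], vector [0,1], vector [0,0]]"

lemma canon_exists:
  fixes p a t b X Y Z w1 w2 f11 f22 f12 :: int
  assumes pp: "prime p" and p2: "p > 2" and dt: "a*b - t^2 = 4*p" and hX: "2*X = a*w1 + t*w2" and hY: "2*Y = t*w1 + b*w2"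
    and hZ: "4*Z = 4*p + a*w1^2 + 2*t*w1*w2 + b*w2^2"
    and f: "2*f11 = b + w1^2" "2*f22 = a + w2^2" "2*f12 = w1*w2 - t" "even f11" "even f22"
    and om: "w1 = 1 \<or> w2 = 1 \<or> (w1 = 0 \<and> w2 = 0 \<and> t mod 4 = 2)"
    and prim: "\<And>d. d dvd a \<Longrightarrow> d dvd t \<Longrightarrow> d dvd b \<Longrightarrow> d dvd X \<Longrightarrow> d dvd Y \<Longrightarrow> d dvd Z \<Longrightarrow> d dvd 1"
  shows "symmetric3 (canon a t b X Y Z) \<and> tern_primitive (canon a t b X Y Z) \<and> tern_invariants (canon a t b X Y Z) (2*p) 1
            \<and> properly_represents (canon a t b X Y Z) (bin_mat a t b)
            \<and> tern_improperly_primitive (reciprocal (canon a t b X Y Z)) \<and> det (reciprocal (canon a t b X Y Z)) = 2*p"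
proof -
  let ?N = "canon a t b X Y Z"
  let ?F = "fmat f11 f12 f22 w1 w2"
  have p0: "p > 0" using p2 by simp
  have cof: "cof3 ?N $i$j = p * cmat a t b w1 w2 $i$j" for i j using canon_cof[OF dt hX hY hZ] .
  have cm2: "cmat a t b w1 w2 $i$j = 2 * ?F $i$j" for i j
    using exhaust_3[of i] exhaust_3[of j] f by (elim disjE; simp add: cmat_nth fmat_nth)
  have cofF: "cof3 ?N $i$j = (2*p) * ?F $i$j" for i j using cof cm2 by simp
  have sym: "symmetric3 ?N" unfolding symmetric3_def mat3_eq forall_3 by (simp add: transpose_def canon_nth)
  have prm: "tern_primitive ?N" unfolding tern_primitive_def tern_tau_def
  proof (rule Gcd_ents_eqI)
    fix c assume "\<And>i j. c dvd ?N$i$j"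
    then have "c dvd ?N$1$1" "c dvd ?N$1$2" "c dvd ?N$2$2" "c dvd ?N$1$3" "c dvd ?N$2$3" "c dvd ?N$3$3" by blast+
    then show "c dvd 1" using prim by (simp add: canon_nth)
  qed auto
  have Om: "tern_Omega ?N = 2*p" unfolding tern_Omega_def
  proof (rule Gcd_ents_eqI)
    show "2*p \<ge> 0" using p0 by simp
    show "2*p dvd cof3 ?N $i$j" for i j using cofF by simp
    fix c assume c: "\<And>i j. c dvd cof3 ?N $i$j"
    have c13: "c dvd p*(-2*w1)" using c[of 1 3] cof by (simp add: cmat_nth)
    have c23: "c dvd p*(-2*w2)" using c[of 2 3] cof by (simp add: cmat_nth)
    have c12: "c dvd p*(w1*w2 - t)" using c[of 1 2] cof by (simp add: cmat_nth)
    have c33: "c dvd p*4" using c[of 3 3] cof by (simp add: cmat_nth)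
    show "c dvd 2*p" using om
    proof (elim disjE conjE)
      assume "w1 = 1" then show ?thesis using c13 by (simp add: algebra_simps)
    next
      assume "w2 = 1" then show ?thesis using c23 by (simp add: algebra_simps)
    next
      assume "w1 = 0" "w2 = 0" "t mod 4 = 2"
      then obtain k where k: "t = 4*k + 2" by (metis div_mod_decomp_int mult.commute)
      have "c dvd p*(-t)" using c12 \<open>w1 = 0\<close> by simp
      then have "c dvd p*(-t) + k*(p*4)" using c33 by simp
      moreover have "p*(-t) + k*(p*4) = -(2*p)" using k by (simp add: algebra_simps)
      ultimately show ?thesis by simp
    qed
  qed
  have dN: "det ?N = 4*p^2" using canon_det[OF dt hX hY hZ] .
  have inv: "tern_invariants ?N (2*p) 1" unfolding tern_invariants_def using Om dN by (simp add: power2_eq_square)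
  have rep: "properly_represents ?N (bin_mat a t b)" unfolding properly_represents_def
  proof (intro exI conjI)
    show "transpose Memb ** ?N ** Memb = bin_mat a t b"
      by (simp add: vec_eq_iff forall_2 mm3 transpose_def Memb_def canon_nth bin_mat_def)
    have "1 \<in> minors32 Memb" unfolding minors32_def
      by (rule CollectI, rule exI[of _ 1], rule exI[of _ 2]) (simp add: Memb_def)
    then show "Gcd (minors32 Memb) = 1" by (rule Gcd_eq_1_I[rotated]) simp
  qed
  have rec: "reciprocal ?N = ?F"
    unfolding mat3_eq reciprocal_def Om using cofF p0 by simp
  have tauF: "tern_tau ?F = 1" unfolding tern_tau_def
  proof (rule Gcd_ents_eqI)
    fix c assume c: "\<And>i j. c dvd ?F$i$j"
    have c13: "c dvd w1" using c[of 1 3] by (simp add: fmat_nth)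
    have c23: "c dvd w2" using c[of 2 3] by (simp add: fmat_nth)
    have c12: "c dvd f12" using c[of 1 2] by (simp add: fmat_nth)
    have c33: "c dvd 2" using c[of 3 3] by (simp add: fmat_nth)
    show "c dvd 1" using om
    proof (elim disjE conjE)
      assume "w1 = 1" then show ?thesis using c13 by simp
    next
      assume "w2 = 1" then show ?thesis using c23 by simp
    next
      assume "w1 = 0" "w2 = 0" "t mod 4 = 2"
      then have "odd f12" using f(3) by presburger
      then obtain k where k: "f12 = 2*k + 1" by (auto elim: oddE)
      have "c dvd f12 - k*2" using c12 c33 by simp
      then show ?thesis using k by simp
    qed
  qed auto
  have sigF: "tern_sigma ?F = 2" unfolding tern_sigma_def
  proof (rule Gcd_eqI)
    show "normalize (2::int) = 2" by simp
    fix x assume "x \<in> {?F $ i $ i | i. True} \<union> {2 * ?F $ i $ j | i j. i \<noteq> j}"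
    then show "2 dvd x"
    proof
      assume "x \<in> {?F $ i $ i | i. True}"
      then obtain i where "x = ?F$i$i" by blast
      then show ?thesis using exhaust_3[of i] f by (auto simp: fmat_nth)
    next
      assume "x \<in> {2 * ?F $ i $ j | i j. i \<noteq> j}"
      then show ?thesis by auto
    qed
  next
    fix c assume "\<And>x. x \<in> {?F $ i $ i | i. True} \<union> {2 * ?F $ i $ j | i j. i \<noteq> j} \<Longrightarrow> c dvd x"
    moreover have "?F$3$3 \<in> {?F $ i $ i | i. True} \<union> {2 * ?F $ i $ j | i j. i \<noteq> j}" by blast
    ultimately show "c dvd 2" by (simp add: fmat_nth)
  qed
  have dF: "det ?F = 2*p"
  proof -
    have "cof3 ?N = (\<chi> i j. (2*p) * ?F$i$j)" unfolding mat3_eq using cofF by simp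
    then have "det (cof3 ?N) = (2*p)^3 * det ?F" using det_scale3 by simp
    moreover have "det (cof3 ?N) = (4*p^2)^2" using det_cof3[of ?N] dN p0 by simp
    ultimately have "(2*p)^3 * det ?F = (4*p^2)^2" by simp
    moreover have "(4*p^2)^2 = (2*p)^3 * (2*p)" by (simp add: power2_eq_square power3_eq_cube algebra_simps)
    ultimately have "(2*p)^3 * det ?F = (2*p)^3 * (2*p)" by simp
    moreover have "(2*p)^3 \<noteq> 0" using p0 by simp
    ultimately show ?thesis by (metis mult_cancel_left)
  qed
  show ?thesis using sym prm inv rep rec tauF sigF dF unfolding tern_improperly_primitive_def by simp
qed




definition Ux :: "int^2^3 \<Rightarrow> int \<Rightarrow> int \<Rightarrow> int \<Rightarrow> int^3^3" where
  "Ux M c1 c2 c3 = vector [vector [M$1$1, M$1$2, c1], vector [M$2$1, M$2$2, c2], vector [M$3$1, M$3$2, c3]]"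

lemma Ux_nth:
  "Ux M c1 c2 c3 $1$1 = M$1$1" "Ux M c1 c2 c3 $1$2 = M$1$2" "Ux M c1 c2 c3 $1$3 = c1"
  "Ux M c1 c2 c3 $2$1 = M$2$1" "Ux M c1 c2 c3 $2$2 = M$2$2" "Ux M c1 c2 c3 $2$3 = c2"
  "Ux M c1 c2 c3 $3$1 = M$3$1" "Ux M c1 c2 c3 $3$2 = M$3$2" "Ux M c1 c2 c3 $3$3 = c3"
  by (simp_all add: Ux_def)

lemma extend_unimodular:
  fixes M :: "int^2^3"
  assumes "Gcd (minors32 M) = 1"
  shows "\<exists>c1 c2 c3. det (Ux M c1 c2 c3) = 1"
proof -
  define n1 where "n1 = M$2$1*M$3$2 - M$2$2*M$3$1"
  define n2 where "n2 = M$3$1*M$1$2 - M$3$2*M$1$1"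
  define n3 where "n3 = M$1$1*M$2$2 - M$1$2*M$2$1"
  define g where "g = gcd n1 (gcd n2 n3)"
  have gd: "g dvd n1" "g dvd n2" "g dvd n3" unfolding g_def by (auto intro: dvd_trans)
  have "g dvd m" if "m \<in> minors32 M" for m
  proof -
    from that obtain r s where rs: "r \<noteq> s" "m = M$r$1*M$s$2 - M$r$2*M$s$1" unfolding minors32_def by blast
    have "m = n1 \<or> m = -n1 \<or> m = n2 \<or> m = -n2 \<or> m = n3 \<or> m = -n3"
      using exhaust_3[of r] exhaust_3[of s] rs unfolding n1_def n2_def n3_def
      by (elim disjE; simp add: algebra_simps)
    then show ?thesis using gd by auto
  qed
  then have "g dvd Gcd (minors32 M)" by (rule Gcd_greatest)
  then have "g dvd 1" using assms by simp
  moreover have "g \<ge> 0" unfolding g_def by simp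
  ultimately have g1: "g = 1" by simp
  obtain u0 v0 where uv: "u0 * n2 + v0 * n3 = gcd n2 n3" using bezout_int by blast
  obtain uu vv where uvv: "uu * n1 + vv * gcd n2 n3 = g" unfolding g_def using bezout_int by blast
  have "det (Ux M uu (vv*u0) (vv * v0)) = uu * n1 + (vv*u0) * n2 + (vv * v0) * n3"
    unfolding n1_def n2_def n3_def by (simp add: det_3 Ux_nth algebra_simps)
  also have "\<dots> = uu * n1 + vv * (u0 * n2 + v0 * n3)" by (simp add: algebra_simps)
  also have "\<dots> = 1" using uv uvv g1 by simp
  finally show ?thesis by blast
qed

lemma transform_block:
  fixes M :: "int^2^3" and A :: "int^3^3"
  shows "(transpose (Ux M c1 c2 c3) ** A ** Ux M c1 c2 c3)$1$1 = (transpose M ** A ** M)$1$1"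
    "(transpose (Ux M c1 c2 c3) ** A ** Ux M c1 c2 c3)$1$2 = (transpose M ** A ** M)$1$2"
    "(transpose (Ux M c1 c2 c3) ** A ** Ux M c1 c2 c3)$2$2 = (transpose M ** A ** M)$2$2"
  by (simp_all add: mm3 transpose_def Ux_nth)

lemma sym_canon:
  fixes A :: "int^3^3"
  assumes "transpose A = A"
  shows "A = canon (A$1$1) (A$1$2) (A$2$2) (A$1$3) (A$2$3) (A$3$3)"
proof -
  have h: "A$j$i = A$i$j" for i j
  proof -
    have "(transpose A)$i$j = A$i$j" using assms by simp
    then show ?thesis by (simp add: transpose_def)
  qed
  show ?thesis unfolding mat3_eq forall_3 using h[of 2 1] h[of 3 1] h[of 3 2] by (simp add: canon_nth)
qed

lemma dvd_mm3:
  fixes A B :: "int^3^3"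
  assumes "\<And>i j. d dvd B$i$j"
  shows "d dvd (A ** B)$i$j" "d dvd (B ** A)$i$j"
  using assms by (simp_all add: mm3 dvd_add dvd_mult dvd_mult2)

lemma adj3': "(transpose (cof3 (A::int^3^3)) ** A)$i$j = (if i = j then det A else 0)"
  using exhaust_3[of i] exhaust_3[of j] by (elim disjE; simp add: cof3_nth mm3 det_3 transpose_def algebra_simps)


definition Vk :: "int \<Rightarrow> int \<Rightarrow> int^3^3" where
  "Vk k1 k2 = vector [vector [1, 0, -k1], vector [0, 1, -k2], vector [0, 0, 1]]"

lemma Vk_nth:
  "Vk k1 k2 $1$1 = 1" "Vk k1 k2 $1$2 = 0" "Vk k1 k2 $1$3 = -k1"
  "Vk k1 k2 $2$1 = 0" "Vk k1 k2 $2$2 = 1" "Vk k1 k2 $2$3 = -k2"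
  "Vk k1 k2 $3$1 = 0" "Vk k1 k2 $3$2 = 0" "Vk k1 k2 $3$3 = 1"
  by (simp_all add: Vk_def)

lemma reduce_canon:
  fixes p a t b x y z :: int
  assumes p0: "p > 0" and dt: "a*b - t^2 = 4*p"
    and d: "det (canon a t b x y z) = 4*p^2"
    and cdv: "\<And>i j. 2*p dvd cof3 (canon a t b x y z) $i$j"
  shows "\<exists>V X Y Z w1 w2. det V = 1 \<and> transpose V ** canon a t b x y z ** V = canon a t b X Y Z
     \<and> w1 \<in> {0,1} \<and> w2 \<in> {0,1} \<and> 2*X = a*w1 + t*w2 \<and> 2*Y = t*w1 + b*w2
     \<and> 4*Z = 4*p + a*w1^2 + 2*t*w1*w2 + b*w2^2"
proof -
  let ?C = "canon a t b x y z"
  have "2*p dvd t*y - b*x" using cdv[of 1 3] by (simp add: cof3_nth canon_nth)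
  then obtain q1 where q1: "b*x - t*y = 2*p*q1" by (metis dvd_def minus_diff_eq mult_minus_right)
  have "2*p dvd x*t - y*a" using cdv[of 2 3] by (simp add: cof3_nth canon_nth)
  then obtain q2 where q2: "a*y - t*x = 2*p*q2" by (metis dvd_def minus_diff_eq mult_minus_right mult.commute)
  have ex: "2*x = a*q1 + t*q2"
  proof -
    have f1: "a*(2*p*q1) = a*(b*x - t*y)" using q1 by simp
    have f2: "t*(2*p*q2) = t*(a*y - t*x)" using q2 by simp
    have f3: "(a*b - t^2)*x = 4*p*x" using dt by simp
    have "(2*p)*(a*q1 + t*q2) = (2*p)*(2*x)" using f1 f2 f3 by (simp add: algebra_simps power2_eq_square)
    then show ?thesis using p0 by simp
  qed
  have ey: "2*y = t*q1 + b*q2"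
  proof -
    have f1: "t*(2*p*q1) = t*(b*x - t*y)" using q1 by simp
    have f2: "b*(2*p*q2) = b*(a*y - t*x)" using q2 by simp
    have f3: "(a*b - t^2)*y = 4*p*y" using dt by simp
    have "(2*p)*(t*q1 + b*q2) = (2*p)*(2*y)" using f1 f2 f3 by (simp add: algebra_simps power2_eq_square)
    then show ?thesis using p0 by simp
  qed
  define w1 where "w1 = q1 mod 2"
  define k1 where "k1 = q1 div 2"
  define w2 where "w2 = q2 mod 2"
  define k2 where "k2 = q2 div 2"
  have dq1: "q1 = 2*k1 + w1" unfolding w1_def k1_def by simp
  have dq2: "q2 = 2*k2 + w2" unfolding w2_def k2_def by simp
  have "q1 mod 2 = 0 \<or> q1 mod 2 = 1" by presburger
  then have w1r: "w1 \<in> {0,1}" unfolding w1_def by auto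
  have "q2 mod 2 = 0 \<or> q2 mod 2 = 1" by presburger
  then have w2r: "w2 \<in> {0,1}" unfolding w2_def by auto
  define X where "X = x - a*k1 - t*k2"
  define Y where "Y = y - t*k1 - b*k2"
  define Z where "Z = z - 2*k1*x - 2*k2*y + a*k1^2 + 2*t*k1*k2 + b*k2^2"
  have T: "transpose (Vk k1 k2) ** ?C ** Vk k1 k2 = canon a t b X Y Z"
    unfolding mat3_eq forall_3 X_def Y_def Z_def
    by (simp add: mm3 transpose_def canon_nth Vk_nth algebra_simps power2_eq_square)
  have dV: "det (Vk k1 k2) = 1" by (simp add: det_3 Vk_nth)
  have hX: "2*X = a*w1 + t*w2" unfolding X_def using ex dq1 dq2 by (simp add: algebra_simps)
  have hY: "2*Y = t*w1 + b*w2" unfolding Y_def using ey dq1 dq2 by (simp add: algebra_simps)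
  have dN: "det (canon a t b X Y Z) = 4*p^2"
    using T[symmetric] d dV by (simp add: det_mul)
  have hZ: "4*Z = 4*p + a*w1^2 + 2*t*w1*w2 + b*w2^2"
  proof -
    have e: "a*(b*Z - Y*Y) - t*(t*Z - X*Y) + X*(t*Y - b*X) = 4*p^2"
      using dN by (simp add: det_3 canon_nth algebra_simps)
    have F1: "b*((2*X)*(2*X)) = b*((a*w1 + t*w2)*(a*w1 + t*w2))" using hX by simp
    have F2: "t*((2*X)*(2*Y)) = t*((a*w1 + t*w2)*(t*w1 + b*w2))" using hX hY by simp
    have F3: "a*((2*Y)*(2*Y)) = a*((t*w1 + b*w2)*(t*w1 + b*w2))" using hY by simp
    have F4: "(a*b - t^2)*Z = 4*p*Z" using dt by simp
    have F5: "(a*b - t^2)*(a*w1^2 + 2*t*w1*w2 + b*w2^2) = 4*p*(a*w1^2 + 2*t*w1*w2 + b*w2^2)" using dt by simp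
    have "(4*p)*(4*Z) = (4*p)*(4*p + a*w1^2 + 2*t*w1*w2 + b*w2^2)"
      using e F1 F2 F3 F4 F5 by (simp add: algebra_simps power2_eq_square)
    then show ?thesis using p0 by simp
  qed
  show ?thesis using T dV w1r w2r hX hY hZ by blast
qed


lemma cof3_congr: "cof3 (transpose V ** A ** V) = transpose (cof3 V) ** cof3 A ** cof3 (V::int^3^3)"
  by (simp add: cof3_mult cof3_transpose)

lemma det_congr: "det (transpose V ** A ** V) = det (V::int^3^3) ^ 2 * det A"
  by (simp add: det_mul power2_eq_square)

lemma unq_reduce:
  fixes p a t b :: int and A :: "int^3^3"
  assumes p0: "p > 0" and dt: "a*b - t^2 = 4*p"
    and symA: "symmetric3 A" and inv: "tern_invariants A (2*p) 1"
    and rep: "properly_represents A (bin_mat a t b)"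
  shows "\<exists>V X Y Z w1 w2. det V = 1 \<and> transpose V ** A ** V = canon a t b X Y Z
     \<and> w1 \<in> {0,1} \<and> w2 \<in> {0,1} \<and> 2*X = a*w1 + t*w2 \<and> 2*Y = t*w1 + b*w2
     \<and> 4*Z = 4*p + a*w1^2 + 2*t*w1*w2 + b*w2^2
     \<and> even (b + w1^2) \<and> even (a + w2^2) \<and> even (w1*w2 - t)"
proof -
  obtain M where M: "transpose M ** A ** M = bin_mat a t b" "Gcd (minors32 M) = 1"
    using rep unfolding properly_represents_def by blast
  obtain c1 c2 c3 where dU: "det (Ux M c1 c2 c3) = 1" using extend_unimodular[OF M(2)] by blast
  let ?U = "Ux M c1 c2 c3"
  let ?A1 = "transpose ?U ** A ** ?U"
  have tA: "transpose A = A" using symA unfolding symmetric3_def .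
  have tA1: "transpose ?A1 = ?A1" using tA by (simp add: matrix_transpose_mul matrix_mul_assoc)
  have A1c: "?A1 = canon a t b (?A1$1$3) (?A1$2$3) (?A1$3$3)"
  proof -
    have "?A1$1$1 = a" "?A1$1$2 = t" "?A1$2$2 = b"
      using transform_block[of M c1 c2 c3 A] M(1) by (simp_all add: bin_mat_def)
    then show ?thesis using sym_canon[OF tA1] by simp
  qed
  have detA: "det A = 4*p^2" using inv unfolding tern_invariants_def by (simp add: power2_eq_square)
  have dA1: "det ?A1 = 4*p^2" using detA dU by (simp add: det_congr)
  have Om: "tern_Omega A = 2*p" using inv unfolding tern_invariants_def by simp
  have dvA: "2*p dvd cof3 A $i$j" for i j
  proof -
    have "cof3 A $i$j \<in> {cof3 A $ i $ j | i j. True}" by blast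
    then have "Gcd {cof3 A $ i $ j | i j. True} dvd cof3 A $i$j" by (rule Gcd_dvd)
    then show ?thesis using Om unfolding tern_Omega_def by simp
  qed
  have dvcong: "2*p dvd cof3 (transpose V ** A ** V) $i$j" for V :: "int^3^3" and i j
    unfolding cof3_congr by (intro dvd_mm3 dvA)
  have dvA1: "2*p dvd cof3 (canon a t b (?A1$1$3) (?A1$2$3) (?A1$3$3)) $i$j" for i j
    using dvcong[of ?U i j] A1c by simp
  obtain V0 X Y Z w1 w2 where R: "det V0 = 1"
    "transpose V0 ** canon a t b (?A1$1$3) (?A1$2$3) (?A1$3$3) ** V0 = canon a t b X Y Z"
    "w1 \<in> {0,1}" "w2 \<in> {0,1}" "2*X = a*w1 + t*w2" "2*Y = t*w1 + b*w2"
    "4*Z = 4*p + a*w1^2 + 2*t*w1*w2 + b*w2^2"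
    using reduce_canon[OF p0 dt _ dvA1] dA1 A1c by metis
  let ?V = "?U ** V0"
  have dV: "det ?V = 1" using dU R(1) by (simp add: det_mul)
  have TV: "transpose ?V ** A ** ?V = canon a t b X Y Z"
    using R(2) A1c by (simp add: matrix_transpose_mul matrix_mul_assoc)
  have cN: "cof3 (canon a t b X Y Z) $i$j = p * cmat a t b w1 w2 $i$j" for i j
    using canon_cof[OF dt R(5) R(6) R(7)] .
  have pd: "2 dvd cmat a t b w1 w2 $i$j" for i j
  proof -
    have "2*p dvd p * cmat a t b w1 w2 $i$j" using dvcong[of ?V i j] TV cN by simp
    then have "p*2 dvd p * cmat a t b w1 w2 $i$j" by (simp add: mult.commute)
    then show ?thesis using p0 by simp
  qed
  have "even (b + w1^2)" using pd[of 1 1] by (simp add: cmat_nth)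
  moreover have "even (a + w2^2)" using pd[of 2 2] by (simp add: cmat_nth)
  moreover have "even (w1*w2 - t)" using pd[of 1 2] by (simp add: cmat_nth)
  ultimately show ?thesis using dV TV R(3-7) by blast
qed




lemma mat_inv3:
  assumes "det (W::int^3^3) = 1"
  shows "W ** transpose (cof3 W) = mat 1" "transpose (cof3 W) ** W = mat 1"
  using assms unfolding mat3_eq by (simp_all add: adj3 adj3' mat_def)

lemma equiv_from_canon:
  fixes A B V W N :: "int^3^3"
  assumes dV: "det V = 1" and dW: "det W = 1" and hA: "transpose V ** A ** V = N" and hB: "transpose W ** B ** W = N"
  shows "tern_equivalent A B"
proof -
  let ?Wi = "transpose (cof3 W)"
  let ?U = "transpose (V ** ?Wi)"
  have i1: "W ** ?Wi = mat 1" using mat_inv3[OF dW] by simp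
  have dWi: "det ?Wi = 1" using det_cof3[of W] dW by simp
  have dU: "det ?U = 1" using dV dWi by (simp add: det_mul)
  have "?U ** A ** transpose ?U = transpose ?Wi ** (transpose V ** A ** V) ** ?Wi"
    by (simp add: matrix_transpose_mul matrix_mul_assoc)
  also have "\<dots> = transpose ?Wi ** (transpose W ** B ** W) ** ?Wi" using hA hB by simp
  also have "\<dots> = transpose (W ** ?Wi) ** B ** (W ** ?Wi)"
    by (simp add: matrix_transpose_mul matrix_mul_assoc)
  also have "\<dots> = B" using i1 by (simp add: transpose_mat matrix_mul_lid matrix_mul_rid)
  finally show ?thesis unfolding tern_equivalent_def using dU by metis
qed

lemma w_unique:
  fixes a b t w1 w2 v1 v2 :: int
  assumes "w1 \<in> {0,1}" "w2 \<in> {0,1}" "v1 \<in> {0,1}" "v2 \<in> {0,1}"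
    "even (b + w1^2)" "even (a + w2^2)" "even (w1*w2 - t)"
    "even (b + v1^2)" "even (a + v2^2)" "even (v1 * v2 - t)"
  shows "w1 = v1 \<and> w2 = v2"
  using assms by (auto; presburger)

lemma unit_values_swap: "unit_values a c b D = unit_values b c a D"
proof -
  have "bqf a c b x y = bqf b c a y x" for x y by (simp add: bqf_def algebra_simps)
  then show ?thesis unfolding unit_values_def by (metis (no_types, lifting))
qed

lemma genus_swap: "in_principal_genus p (b, c, a) \<Longrightarrow> in_principal_genus p (a, c, b)"
  unfolding in_principal_genus_def same_genus_def using unit_values_swap by (simp add: mult.commute mult.left_commute)




lemma four_dvd_odd:
  fixes a b :: int
  assumes "odd a" "4 dvd a*b"
  shows "4 dvd b"
proof -
  have "coprime 2 a" using assms(1) by simp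
  then have "coprime (2^2) a" using coprime_power_left_iff[of 2 2 a] by blast
  then have "coprime 4 a" by simp
  then show ?thesis using assms(2) coprime_dvd_mult_right_iff by blast
qed

lemma existence:
  fixes p a t b :: int
  assumes pp: "prime p" and p5: "p \<ge> 5" and apos: "a > 0" and dt: "a*b - t^2 = 4*p"
    and cases: "(bin_primitive a (2*t) b \<and> \<not> in_principal_genus p (a, 2*t, b))
              \<or> (4 dvd a \<and> 4 dvd (2*t) \<and> 4 dvd b \<and> bin_primitive (a div 4) ((2*t) div 4) (b div 4))"
  shows "\<exists>A::int^3^3. symmetric3 A \<and> tern_primitive A \<and> tern_invariants A (2*p) 1
            \<and> properly_represents A (bin_mat a t b)
            \<and> tern_improperly_primitive (reciprocal A) \<and> det (reciprocal A) = 2*p"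
proof -
  have p2: "p > 2" using p5 by simp
  have op: "odd p" using pp p2 by (simp add: prime_odd_int)
  have "a*b > 0" using dt p2 by (smt (verit) zero_le_power2)
  then have bpos: "b > 0" using apos by (simp add: zero_less_mult_iff)
  have ab: "a*b = t^2 + 4*p" using dt by simp
  show ?thesis using cases
  proof
    assume C1: "bin_primitive a (2*t) b \<and> \<not> in_principal_genus p (a, 2*t, b)"
    have G: "Gcd {a, 2*t, b} = 1" using C1 unfolding bin_primitive_def by simp
    have cd: "d dvd 1" if "d dvd a" "d dvd t" "d dvd b" for d
    proof -
      have "d dvd Gcd {a, 2*t, b}" using that by (intro Gcd_greatest) auto
      then show ?thesis unfolding G .
    qed
    have ng: "\<not> in_principal_genus p (a, 2*t, b)" using C1 by simp
    have nb: "\<not> (even a \<and> even b)"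
    proof
      assume "even a \<and> even b"
      then have "2 dvd Gcd {a, 2*t, b}" by (intro Gcd_greatest) auto
      then have "(2::int) dvd 1" unfolding G .
      then show False by simp
    qed
    show ?thesis
    proof (cases "odd a")
      case True
      have a3: "a mod 4 = 3"
      proof (rule ccontr)
        assume "a mod 4 \<noteq> 3"
        then have "a mod 4 = 1" using True by presburger
        then show False using genus_principal[OF pp p2 apos dt] ng by simp
      qed
      then obtain a1 where a1: "a = 4*a1 + 3" by (metis div_mod_decomp_int mult.commute)
      show ?thesis
      proof (cases "even t")
        case True
        then obtain t1 where t1: "t = 2*t1" by (auto elim: evenE)
        have "a*b = 4*(t1^2 + p)" using ab t1 by (simp add: power2_eq_square algebra_simps)
        then have "4 dvd b" using four_dvd_odd \<open>odd a\<close> by (metis dvd_triv_left)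
        then obtain b1 where b1: "b = 4*b1" by (auto elim: dvdE)
        have "symmetric3 (canon a t b t1 (2*b1) (p + b1)) \<and> tern_primitive (canon a t b t1 (2*b1) (p + b1)) \<and> tern_invariants (canon a t b t1 (2*b1) (p + b1)) (2*p) 1
            \<and> properly_represents (canon a t b t1 (2*b1) (p + b1)) (bin_mat a t b)
            \<and> tern_improperly_primitive (reciprocal (canon a t b t1 (2*b1) (p + b1))) \<and> det (reciprocal (canon a t b t1 (2*b1) (p + b1))) = 2*p"
          by (rule canon_exists[where X="t1" and Y="2*b1" and Z="p + b1" and ?w1.0="0" and ?w2.0="1" and ?f11.0="2*b1" and ?f22.0="2*(a1+1)" and ?f12.0="-t1"])
             (use pp p2 dt t1 b1 a1 cd in auto)
        then show ?thesis by blast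
      next
        case False
        then obtain t1 where t1: "t = 2*t1 + 1" by (auto elim: oddE)
        have "a*b = 4*(t1^2 + t1 + p) + 1" using ab t1 by (simp add: power2_eq_square algebra_simps)
        then have "(a*b) mod 4 = 1" by presburger
        moreover have "(a*b) mod 4 = ((a mod 4) * (b mod 4)) mod 4" by (simp add: mod_mult_eq)
        moreover have "b mod 4 = 0 \<or> b mod 4 = 1 \<or> b mod 4 = 2 \<or> b mod 4 = 3" by presburger
        ultimately have "b mod 4 = 3" using a3 by auto
        then obtain b1 where b1: "b = 4*b1 + 3" by (metis div_mod_decomp_int mult.commute)
        let ?N = "canon a t b (2*a1 + t1 + 2) (t1 + 2*b1 + 2) (p + a1 + t1 + b1 + 2)"
        have "symmetric3 ?N \<and> tern_primitive ?N \<and> tern_invariants ?N (2*p) 1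
            \<and> properly_represents ?N (bin_mat a t b)
            \<and> tern_improperly_primitive (reciprocal ?N) \<and> det (reciprocal ?N) = 2*p"
          by (rule canon_exists[where X="2*a1 + t1 + 2" and Y="t1 + 2*b1 + 2" and Z="p + a1 + t1 + b1 + 2" and ?w1.0="1" and ?w2.0="1" and ?f11.0="2*b1+2" and ?f22.0="2*a1+2" and ?f12.0="-t1"])
             (use pp p2 dt t1 b1 a1 cd in auto)
        then show ?thesis by blast
      qed
    next
      case False
      then have ea: "even a" by simp
      then have ob: "odd b" using nb by simp
      have "t^2 = a*b - 2*(2*p)" using ab by simp
      then have "even (t^2)" using ea by simp
      then have "even t" by simp
      then obtain t1 where t1: "t = 2*t1" by (auto elim: evenE)
      have "b*a = 4*(t1^2 + p)" using ab t1 by (simp add: power2_eq_square algebra_simps)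
      then have "4 dvd a" using four_dvd_odd ob by (metis dvd_triv_left)
      then obtain a1 where a1: "a = 4*a1" by (auto elim: dvdE)
      have b3: "b mod 4 = 3"
      proof (rule ccontr)
        assume "b mod 4 \<noteq> 3"
        then have "b mod 4 = 1" using ob by presburger
        moreover have "b*a - t^2 = 4*p" using dt by (simp add: mult.commute)
        ultimately have "in_principal_genus p (b, 2*t, a)" using genus_principal[OF pp p2 bpos] by simp
        then show False using genus_swap ng by blast
      qed
      then obtain b1 where b1: "b = 4*b1 + 3" by (metis div_mod_decomp_int mult.commute)
      let ?N = "canon a t b (2*a1) t1 (p + a1)"
      have "symmetric3 ?N \<and> tern_primitive ?N \<and> tern_invariants ?N (2*p) 1
            \<and> properly_represents ?N (bin_mat a t b)
            \<and> tern_improperly_primitive (reciprocal ?N) \<and> det (reciprocal ?N) = 2*p"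
        by (rule canon_exists[where X="2*a1" and Y="t1" and Z="p + a1" and ?w1.0="1" and ?w2.0="0" and ?f11.0="2*b1+2" and ?f22.0="2*a1" and ?f12.0="-t1"])
           (use pp p2 dt t1 b1 a1 cd in auto)
      then show ?thesis by blast
    qed
  next
    assume C2: "4 dvd a \<and> 4 dvd (2*t) \<and> 4 dvd b \<and> bin_primitive (a div 4) ((2*t) div 4) (b div 4)"
    obtain a1 where a1: "a = 4*a1" using C2 by (auto elim: dvdE)
    obtain b1 where b1: "b = 4*b1" using C2 by (auto elim: dvdE)
    obtain t1 where t1: "t = 2*t1" using C2 by (auto elim: dvdE)
    have "4*(4*a1*b1 - t1^2) = 4*p" using dt a1 b1 t1 by (simp add: power2_eq_square algebra_simps)
    then have "t1^2 = 4*a1*b1 - p" by simp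
    then have "odd (t1^2)" using op by simp
    then have "odd t1" by simp
    then have tm: "t mod 4 = 2" using t1 by presburger
    have cd: "d dvd 1" if "d dvd a" "d dvd t" "d dvd b" "d dvd p" for d
    proof -
      have "\<bar>d\<bar> dvd p" using that by simp
      moreover have "\<forall>m. 0 \<le> m \<and> m dvd p \<longrightarrow> m = 1 \<or> m = p" using pp by (simp add: prime_int_iff)
      ultimately have "\<bar>d\<bar> = 1 \<or> \<bar>d\<bar> = p" by simp
      moreover have "\<bar>d\<bar> \<noteq> p"
      proof
        assume "\<bar>d\<bar> = p"
        then have "p dvd a" "p dvd t" "p dvd b" using that by (metis abs_dvd_iff)+
        then show False using not_all_dvd[OF pp p2 dt] by blast
      qed
      ultimately have "\<bar>d\<bar> = 1" by simp
      then show ?thesis by simp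
    qed
    let ?N = "canon a t b 0 0 p"
    have "symmetric3 ?N \<and> tern_primitive ?N \<and> tern_invariants ?N (2*p) 1
            \<and> properly_represents ?N (bin_mat a t b)
            \<and> tern_improperly_primitive (reciprocal ?N) \<and> det (reciprocal ?N) = 2*p"
      by (rule canon_exists[where X="0" and Y="0" and Z="p" and ?w1.0="0" and ?w2.0="0" and ?f11.0="2*b1" and ?f22.0="2*a1" and ?f12.0="-t1"])
         (use pp p2 dt t1 b1 a1 cd tm in auto)
    then show ?thesis by blast
  qed
qed




theorem mainTheorem3:
  fixes p a t b :: int
  assumes "prime p" and "p \<ge> 5"
    and posdef: "a > 0" "a * b - t^2 > 0"
    and disc: "(2*t)^2 - 4*a*b = -16*p"
    and cases: "(bin_primitive a (2*t) b \<and> \<not> in_principal_genus p (a, 2*t, b))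
              \<or> (4 dvd a \<and> 4 dvd (2*t) \<and> 4 dvd b \<and> bin_primitive (a div 4) ((2*t) div 4) (b div 4))"
  shows "(\<exists>A::int^3^3. symmetric3 A \<and> tern_primitive A \<and> tern_invariants A (2*p) 1
            \<and> properly_represents A (bin_mat a t b)
            \<and> tern_improperly_primitive (reciprocal A) \<and> det (reciprocal A) = 2*p)
       \<and> (\<forall>A B::int^3^3.
            symmetric3 A \<and> tern_primitive A \<and> tern_invariants A (2*p) 1
              \<and> properly_represents A (bin_mat a t b) \<and>
            symmetric3 B \<and> tern_primitive B \<and> tern_invariants B (2*p) 1
              \<and> properly_represents B (bin_mat a t b)
            \<longrightarrow> tern_equivalent A B)"
proof
  have dt: "a*b - t^2 = 4*p" using disc by (simp add: power2_eq_square algebra_simps)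
  have p0: "p > 0" using assms(2) by simp
  show "\<exists>A::int^3^3. symmetric3 A \<and> tern_primitive A \<and> tern_invariants A (2*p) 1
            \<and> properly_represents A (bin_mat a t b)
            \<and> tern_improperly_primitive (reciprocal A) \<and> det (reciprocal A) = 2*p"
    by (rule existence[OF assms(1,2) posdef(1) dt cases])
  show "\<forall>A B::int^3^3.
            symmetric3 A \<and> tern_primitive A \<and> tern_invariants A (2*p) 1
              \<and> properly_represents A (bin_mat a t b) \<and>
            symmetric3 B \<and> tern_primitive B \<and> tern_invariants B (2*p) 1
              \<and> properly_represents B (bin_mat a t b)
            \<longrightarrow> tern_equivalent A B"
  proof (intro allI impI)
    fix A B :: "int^3^3"
    assume H: "symmetric3 A \<and> tern_primitive A \<and> tern_invariants A (2*p) 1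
              \<and> properly_represents A (bin_mat a t b) \<and>
            symmetric3 B \<and> tern_primitive B \<and> tern_invariants B (2*p) 1
              \<and> properly_represents B (bin_mat a t b)"
    obtain V X Y Z w1 w2 where RA: "det V = 1" "transpose V ** A ** V = canon a t b X Y Z"
      "w1 \<in> {0,1}" "w2 \<in> {0,1}" "2*X = a*w1 + t*w2" "2*Y = t*w1 + b*w2"
      "4*Z = 4*p + a*w1^2 + 2*t*w1*w2 + b*w2^2"
      "even (b + w1^2)" "even (a + w2^2)" "even (w1*w2 - t)"
      using unq_reduce[OF p0 dt, of A] H by blast
    obtain W X' Y' Z' v1 v2 where RB: "det W = 1" "transpose W ** B ** W = canon a t b X' Y' Z'"
      "v1 \<in> {0,1}" "v2 \<in> {0,1}" "2*X' = a * v1 + t * v2" "2*Y' = t * v1 + b * v2"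
      "4*Z' = 4*p + a * v1^2 + 2*t * v1 * v2 + b * v2^2"
      "even (b + v1^2)" "even (a + v2^2)" "even (v1 * v2 - t)"
      using unq_reduce[OF p0 dt, of B] H by blast
    have "w1 = v1 \<and> w2 = v2" using w_unique[OF RA(3,4) RB(3,4) RA(8,9,10) RB(8,9,10)] .
    then have "X = X'" "Y = Y'" "Z = Z'" using RA(5,6,7) RB(5,6,7) by simp_all
    then show "tern_equivalent A B" using equiv_from_canon[OF RA(1) RB(1) RA(2)] RB(2) by simp
  qed
qed


end
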